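(* Let $p(m,n)$, for integers $m,n\ge 0$ with $m+n>0$, be the unique function satisfying the recurrence $$p(m,n)=\frac{n}{m+n}\,p(m-1,n)+\frac{m}{m+n}\,p(m,n-1)\qquad (m>0,\ n>0)$$ with boundary conditions $p(m,0)=0$ for $m>0$ and $p(0,n)=1$ for $n>0$. Then for all integers $m\ge 0$, $n\ge 0$ with $m+n>0$, $$p(m,n)=\sum_{j=0}^{n}\frac{(-1)^j}{j!}\,\frac{(n-j)^{m+n}}{(m+n-j)!}.$$
   Context: "War of ruins": two armies A and B start with $m$ and $n$ soldiers. At each discrete step, while both are positive, with probability $m/(m+n)$ army B loses one soldier ($(m,n)\to(m,n-1)$) and with probability $n/(m+n)$ army A loses one soldier ($(m,n)\to(m-1,n)$). $p(m,n)$ is the probability that army A is reduced to $0$ soldiers before army B is; it is characterized by the recurrence and boundary conditions stated in the claim. *)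

theory Defs
  imports "HOL-Analysis.Analysis"
begin

end

theory Submission
  imports Defs
begin

definition G :: "nat \<Rightarrow> nat \<Rightarrow> real \<Rightarrow> real" where
 "G n k a = (\<Sum>j\<le>n. (-1)^j * real (n choose j) * (a + real (n - j))^k)"

lemma G_step: "G (Suc n) (Suc k) a = a * G (Suc n) k a + real (Suc n) * G n k (a+1)"
proof -
  have "G (Suc n) (Suc k) a = (\<Sum>j\<le>Suc n. (-1)^j * real (Suc n choose j) * (a + real (Suc n - j))^k * a)
      + (\<Sum>j\<le>Suc n. (-1)^j * (real (Suc n - j) * real (Suc n choose j)) * (a + real (Suc n - j))^k)"
    unfolding G_def by (simp add: sum.distrib[symmetric] algebra_simps)
  also have "(\<Sum>j\<le>Suc n. (-1)^j * real (Suc n choose j) * (a + real (Suc n - j))^k * a) = a * G (Suc n) k a"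
    unfolding G_def by (simp add: sum_distrib_left algebra_simps)
  also have "(\<Sum>j\<le>Suc n. (-1)^j * (real (Suc n - j) * real (Suc n choose j)) * (a + real (Suc n - j))^k)
     = (\<Sum>j\<le>Suc n. (-1)^j * (real (Suc n) * real (n choose j)) * (a + real (Suc n - j))^k)"
    apply (rule sum.cong, simp)
    using binomial_absorb_comp[of "Suc n"] by (metis diff_Suc_1 of_nat_mult)
  also have "\<dots> = (\<Sum>j\<le>n. (-1)^j * (real (Suc n) * real (n choose j)) * (a + real (Suc n - j))^k)"
    by (simp)
  also have "\<dots> = real (Suc n) * G n k (a+1)"
    unfolding G_def sum_distrib_left
    apply (rule sum.cong, simp)
    by (simp add: Suc_diff_le algebra_simps)
  finally show ?thesis .
qed

lemma G_main: "(k < n \<longrightarrow> G n k a = 0) \<and> G k k a = fact k"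
proof (induction k arbitrary: n a)
  case 0
  then show ?case
    using choose_alternating_sum[of n, where 'a=real] by (auto simp: G_def)
next
  case (Suc k)
  have A: "G n (Suc k) a = 0" if lt: "Suc k < n" for n
  proof -
    obtain n' where n: "n = Suc n'" using lt by (cases n) simp_all
    show ?thesis using Suc[of n a] Suc[of n' "a+1"] that using lt unfolding n G_step by simp
  qed
  have B: "G (Suc k) (Suc k) a = fact (Suc k)"
    using Suc[of "Suc k" a] Suc[of k "a+1"] unfolding G_step by simp
  show ?case using A B by blast
qed

definition F :: "nat \<Rightarrow> nat \<Rightarrow> real" where
 "F m n = (\<Sum>j = 0..n. (-1) ^ j / fact j * (real (n - j) ^ (m + n) / fact (m + n - j)))"

lemma F0: "n > 0 \<Longrightarrow> F 0 n = 1"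
proof -
  assume "n > 0"
  have "F 0 n = G n n 0 / fact n"
    unfolding F_def G_def atLeast0AtMost sum_divide_distrib
    apply (rule sum.cong, simp)
    by (simp add: binomial_fact field_simps)
  then show ?thesis using G_main[of n n 0] by simp
qed

lemma FB: "m > 0 \<Longrightarrow> F m 0 = 0"
  unfolding F_def by simp

lemma term_aux0:
  fixes a b e :: real
  assumes "a > 0" "b > 0"
  shows "-e/(a*b) = -(a+e)/((a+b)*a) + (b-e)/((a+b)*b)"
proof -
  have "a \<noteq> 0" "b \<noteq> 0" "a+b \<noteq> 0" using assms by auto
  then show ?thesis by (simp add: divide_simps) algebra
qed

lemma term_aux:
  fixes i e m s P fi fm :: real
  assumes "i \<ge> 0" "e \<ge> 0" "m \<ge> 0" "fi > 0" "fm > 0"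
  shows "(-s) / ((i+1)*fi) * (e * P / ((m+e+1)*fm)) =
    (i+e+1)/(m+i+e+2) * ((-s) / ((i+1)*fi) * (P / fm))
    + (m+1)/(m+i+e+2) * (s/fi * (P/((m+e+1)*fm)))"
proof -
  define K where "K = s*P/(fi*fm)"
  have nz: "i+1 \<noteq> 0" "m+e+1 \<noteq> 0" "(i+1)+(m+e+1) \<noteq> 0" "m+i+e+2 \<noteq> 0" "fi \<noteq> 0" "fm \<noteq> 0" using assms by auto
  have h: "-e/((i+1)*(m+e+1)) = -((i+1)+e)/(((i+1)+(m+e+1))*(i+1)) + ((m+e+1)-e)/(((i+1)+(m+e+1))*(m+e+1))"
    by (rule term_aux0) (use assms in auto)
  have "(-s) / ((i+1)*fi) * (e * P / ((m+e+1)*fm)) = K * (-e/((i+1)*(m+e+1)))"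
    unfolding K_def using nz by (simp add: divide_simps, (algebra)?)
  also have "\<dots> = K * (-((i+1)+e)/(((i+1)+(m+e+1))*(i+1))) + K * (((m+e+1)-e)/(((i+1)+(m+e+1))*(m+e+1)))"
    unfolding h by (simp add: algebra_simps)
  also have "K * (-((i+1)+e)/(((i+1)+(m+e+1))*(i+1))) = (i+e+1)/(m+i+e+2) * ((-s) / ((i+1)*fi) * (P / fm))"
    unfolding K_def using nz by (simp add: divide_simps, (algebra)?)
  also have "K * (((m+e+1)-e)/(((i+1)+(m+e+1))*(m+e+1))) = (m+1)/(m+i+e+2) * (s/fi * (P/((m+e+1)*fm)))"
    unfolding K_def using nz by (simp add: divide_simps, (algebra)?)
  finally show ?thesis .
qed

lemma term_id:
  fixes i e m :: nat
  shows "(-1)^Suc i / fact (Suc i) * (real e ^ (m+i+e+2) / fact (m+e+1)) =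
    real (i+e+1)/real(m+i+e+2) * ((-1)^Suc i / fact (Suc i) * (real e ^ (m+i+e+1) / fact (m+e)))
    + real (m+1)/real(m+i+e+2) * ((-1)^i/fact i * (real e ^(m+i+e+1)/fact(m+e+1)))"
proof -
  have f1: "(fact (Suc i)::real) = (real i + 1) * fact i" by simp
  have f2: "(fact (m+e+1)::real) = (real m + real e + 1) * fact (m+e)" by simp
  have p: "real e ^ (m+i+e+2) = real e * real e ^ (m+i+e+1)" by simp
  have s: "(-1::real)^Suc i = - ((-1)^i)" by simp
  have r: "real (i+e+1) = real i + real e + 1" "real(m+i+e+2) = real m + real i + real e + 2" "real (m+1) = real m + 1" by simp_all
  show ?thesis unfolding f1 f2 p s r
    by (rule term_aux) auto
qed

lemma Frec: "F (Suc m) (Suc n) = real (Suc n) / real (Suc m + Suc n) * F m (Suc n)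
   + real (Suc m) / real (Suc m + Suc n) * F (Suc m) n"
proof -
  let ?c1 = "real (Suc n) / real (Suc m + Suc n)" and ?c2 = "real (Suc m) / real (Suc m + Suc n)"
  have L: "F (Suc m) (Suc n) = real (Suc n)^(Suc m + Suc n)/fact(Suc m + Suc n)
     + (\<Sum>i=0..n. (-1)^Suc i / fact (Suc i) * (real (n - i) ^ (Suc m + Suc n) / fact (Suc m + Suc n - Suc i)))"
    unfolding F_def sum.atLeast0_atMost_Suc_shift by simp
  have A: "F m (Suc n) = real (Suc n)^(m + Suc n)/fact(m + Suc n)
     + (\<Sum>i=0..n. (-1)^Suc i / fact (Suc i) * (real (n - i) ^ (m + Suc n) / fact (m + Suc n - Suc i)))"
    unfolding F_def sum.atLeast0_atMost_Suc_shift by simp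
  have t0: "real (Suc n)^(Suc m + Suc n)/fact(Suc m + Suc n) = ?c1 * (real (Suc n)^(m + Suc n)/fact(m + Suc n))"
  proof -
    have f: "(fact (Suc m + Suc n)::real) = real (Suc m + Suc n) * fact (m + Suc n)"
      by (metis add_Suc fact_Suc of_nat_fact of_nat_mult)
    show ?thesis unfolding f by (simp add: field_simps)
  qed
  have ts: "(\<Sum>i=0..n. (-1)^Suc i / fact (Suc i) * (real (n - i) ^ (Suc m + Suc n) / fact (Suc m + Suc n - Suc i)))
    = ?c1 * (\<Sum>i=0..n. (-1)^Suc i / fact (Suc i) * (real (n - i) ^ (m + Suc n) / fact (m + Suc n - Suc i)))
      + ?c2 * F (Suc m) n"
    unfolding F_def sum_distrib_left sum.distrib[symmetric]
  proof (rule sum.cong, simp)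
    fix i assume "i \<in> {0..n}"
    then obtain e where n: "n = i + e" by (metis atLeastAtMost_iff le_add_diff_inverse)
    have a1: "Suc m + Suc n = m+i+e+2" "m+i+e+2 - Suc i = m+e+1" "n - i = e"
      "m + Suc n = m+i+e+1" "m+i+e+1 - Suc i = m+e" "Suc m + n = m+i+e+1" "m+i+e+1 - i = m+e+1"
      using n by auto
    have a2: "Suc n = i+e+1" "Suc m = m+1" using n by auto
    show "(-1)^Suc i / fact (Suc i) * (real (n - i) ^ (Suc m + Suc n) / fact (Suc m + Suc n - Suc i))
       = ?c1 * ((-1)^Suc i / fact (Suc i) * (real (n - i) ^ (m + Suc n) / fact (m + Suc n - Suc i)))
         + ?c2 * ((-1) ^ i / fact i * (real (n - i) ^ (Suc m + n) / fact (Suc m + n - i)))"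
      unfolding a1 unfolding a2 by (rule term_id)
  qed
  show ?thesis unfolding L A ts t0 by (simp add: algebra_simps)
qed

lemma uniq:
  fixes p :: "nat \<Rightarrow> nat \<Rightarrow> real"
  assumes rec: "\<And>m n. m > 0 \<Longrightarrow> n > 0 \<Longrightarrow>
      p m n = real n / real (m + n) * p (m - 1) n + real m / real (m + n) * p m (n - 1)"
    and bound_B: "\<And>m. m > 0 \<Longrightarrow> p m 0 = 0"
    and bound_A: "\<And>n. n > 0 \<Longrightarrow> p 0 n = 1"
  shows "\<forall>m n. m + n = s \<longrightarrow> s > 0 \<longrightarrow> p m n = F m n"
proof (induction s rule: less_induct)
  case (less s)
  show ?case
  proof (intro allI impI)
    fix m n assume s: "m + n = s" "s > 0"
    show "p m n = F m n"
    proof (cases "m = 0")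
      case True then show ?thesis using s bound_A F0 by auto
    next
      case m0: False
      show ?thesis
      proof (cases "n = 0")
        case True then show ?thesis using m0 bound_B FB by auto
      next
        case False
        then obtain m' n' where mn: "m = Suc m'" "n = Suc n'" using m0 by (metis not0_implies_Suc)
        have "p m (n-1) = F m (n-1)" "p (m-1) n = F (m-1) n"
          using less[of "s - 1"] s mn by auto
        then show ?thesis using rec[of m n] Frec[of m' n'] mn by simp
      qed
    qed
  qed
qed

theorem proposition1:
  fixes p :: "nat \<Rightarrow> nat \<Rightarrow> real"
  assumes rec: "\<And>m n. m > 0 \<Longrightarrow> n > 0 \<Longrightarrow>
      p m n = real n / real (m + n) * p (m - 1) n + real m / real (m + n) * p m (n - 1)"
    and bound_B: "\<And>m. m > 0 \<Longrightarrow> p m 0 = 0"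
    and bound_A: "\<And>n. n > 0 \<Longrightarrow> p 0 n = 1"
    and pos: "m + n > 0"
  shows "p m n = (\<Sum>j = 0..n. (-1) ^ j / fact j * (real (n - j) ^ (m + n) / fact (m + n - j)))"
  using uniq[OF rec bound_B bound_A, of "m+n"] pos unfolding F_def by blast

end
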